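(* Let $X_1,X_2,\dots$ be i.i.d. Bernoulli random variables with $\Pr\{X_i=1\}=1-\Pr\{X_i=0\}=p\in(0,1)$, let $\gamma$ be a positive integer, and let $\mathbf n$ be the random integer satisfying $\sum_{i=1}^{\mathbf n-1}X_i<\gamma=\sum_{i=1}^{\mathbf n}X_i$ (the number of trials needed to obtain $\gamma$ successes). For $z,p\in(0,1)$ let $\mathscr{M}(z,p)=z\ln\frac pz+(1-z)\ln\frac{1-p}{1-z}$ and $$\Delta=\min\left\{\frac12,\ \frac{C_{\mathrm{BE}}[z^2+(1-z)^2]}{\sqrt{\gamma(1-z)}}\right\}.$$ Then $$\Pr\Big\{\frac{\gamma}{\mathbf n}\le z\Big\}\le\Big(\frac12+\Delta\Big)\exp\Big(\frac\gamma z\mathscr{M}(z,p)\Big)\quad\text{for } z\in(0,p)\text{ such that }\tfrac\gamma z\text{ is an integer},$$ $$\Pr\Big\{\frac{\gamma}{\mathbf n}\ge z\Big\}\le\Big(\frac12+\Delta\Big)\exp\Big(\frac\gamma z\mathscr{M}(z,p)\Big)\quad\text{for } z\in(p,1)\text{ such that }\tfrac\gamma z\text{ is an integer}.$$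
   Context: $C_{\mathrm{BE}}$ denotes the absolute constant in the Berry–Esseen inequality: for i.i.d. $Y_1,Y_2,\dots$ distributed as $Y$ with $\mathbb{E}[Y]=0$, $\mathbb{E}[Y^2]>0$, $\mathbb{E}[|Y|^3]<\infty$, the cdf $F_n$ of $\sum_{i=1}^nY_i/\sqrt{n\mathbb{E}[Y^2]}$ satisfies $|F_n(y)-\Phi(y)|\le\frac{C_{\mathrm{BE}}}{\sqrt n}\frac{\mathbb{E}[|Y|^3]}{\mathbb{E}^{3/2}[Y^2]}$ for all $y,n$, where $\Phi$ is the standard normal cdf. *)

theory Defs
  imports "HOL-Probability.Probability"
begin

definition std_normal_cdf :: "real \<Rightarrow> real" where
  "std_normal_cdf y = measure (density lborel std_normal_density) {..y}"

definition berry_esseen_const :: "real \<Rightarrow> bool" where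
  "berry_esseen_const C \<longleftrightarrow>
    (\<forall>\<mu> :: real measure.
       prob_space \<mu> \<and> sets \<mu> = sets borel \<and> integrable \<mu> (\<lambda>y. \<bar>y\<bar> ^ 3) \<and>
       (\<integral>y. y \<partial>\<mu>) = 0 \<and> (\<integral>y. y\<^sup>2 \<partial>\<mu>) > 0 \<longrightarrow>
       (\<forall>n::nat. n > 0 \<longrightarrow> (\<forall>y::real.
          \<bar>measure (PiM {..<n} (\<lambda>_. \<mu>))
              {\<omega> \<in> space (PiM {..<n} (\<lambda>_. \<mu>)).
                 (\<Sum>i<n. \<omega> i) / sqrt (real n * (\<integral>t. t\<^sup>2 \<partial>\<mu>)) \<le> y}
            - std_normal_cdf y\<bar>
          \<le> C / sqrt (real n) * (\<integral>t. \<bar>t\<bar> ^ 3 \<partial>\<mu>) / (\<integral>t. t\<^sup>2 \<partial>\<mu>) powr (3/2))))"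

definition rateM :: "real \<Rightarrow> real \<Rightarrow> real" where
  "rateM z p = z * ln (p / z) + (1 - z) * ln ((1 - p) / (1 - z))"

text \<open>Number of trials needed to obtain gamma successes: the least m with
  X_1 + ... + X_m = gamma (for 0/1-valued X this is the n with
  sum_{i<n} X_i < gamma = sum_{i\<le>n} X_i).\<close>
definition trials_needed :: "(nat \<Rightarrow> 'a \<Rightarrow> real) \<Rightarrow> nat \<Rightarrow> 'a \<Rightarrow> nat" where
  "trials_needed X \<gamma> \<omega> = (LEAST m. (\<Sum>i\<in>{1..m}. X i \<omega>) = real \<gamma>)"

end

theory Submission
  imports Defs
begin

lemma std_normal_cdf_0: "std_normal_cdf 0 = 1/2"
proof -
  let ?d = std_normal_density
  have int: "integrable lborel (\<lambda>x. indicator A x * ?d x)" if "A \<in> sets borel" for A :: "real set"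
    using integrable_mult_indicator[of A lborel ?d] that integrable_normal_density[of 0 1] by simp
  have even: "?d (-x) = ?d x" for x by (simp add: std_normal_density_def)
  have e1: "(\<integral>x. indicator {..0} x * ?d x \<partial>lborel) = (\<integral>x. indicator {0..} x * ?d x \<partial>lborel)"
  proof -
    have "(\<integral>x. indicator {..0} x * ?d x \<partial>lborel) = (\<integral>x. indicator {..0} (0 + -1 * x) * ?d (0 + -1 * x) \<partial>lborel)"
      using lborel_integral_real_affine[of "-1" "\<lambda>x. indicator {..0} x * ?d x" 0] by simp
    also have "\<dots> = (\<integral>x. indicator {0..} x * ?d x \<partial>lborel)"
      by (rule Bochner_Integration.integral_cong) (auto simp: even indicator_def)
    finally show ?thesis .
  qed
  have e2: "(\<integral>x. indicator {0..} x * ?d x \<partial>lborel) = (\<integral>x. indicator {0<..} x * ?d x \<partial>lborel)"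
  proof (rule integral_cong_AE)
    show "AE x in lborel. indicator {0..} x * ?d x = indicator {0<..} x * ?d x"
      using AE_lborel_singleton[of 0] by eventually_elim (auto simp: indicator_def)
  qed auto
  have e3: "(\<integral>x. indicator {..0} x * ?d x \<partial>lborel) + (\<integral>x. indicator {0<..} x * ?d x \<partial>lborel) = 1"
  proof -
    have "(\<integral>x. indicator {..0} x * ?d x \<partial>lborel) + (\<integral>x. indicator {0<..} x * ?d x \<partial>lborel)
        = (\<integral>x. indicator {..0} x * ?d x + indicator {0<..} x * ?d x \<partial>lborel)"
      by (rule Bochner_Integration.integral_add[symmetric]) (auto intro!: int)
    also have "\<dots> = (\<integral>x. ?d x \<partial>lborel)"
      by (rule Bochner_Integration.integral_cong) (auto simp: indicator_def)
    also have "\<dots> = 1" using integral_normal_density[of 0 1] by simp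
    finally show ?thesis .
  qed
  have "emeasure (density lborel ?d) {..0} = (\<integral>\<^sup>+x. ennreal (indicator {..0} x * ?d x) \<partial>lborel)"
    by (subst emeasure_density) (auto intro!: nn_integral_cong simp: indicator_def)
  also have "\<dots> = ennreal (\<integral>x. indicator {..0} x * ?d x \<partial>lborel)"
    by (rule nn_integral_eq_integral) (auto intro!: int)
  finally have "std_normal_cdf 0 = (\<integral>x. indicator {..0} x * ?d x \<partial>lborel)"
    unfolding std_normal_cdf_def measure_def
    by (simp add: integral_nonneg_AE)
  then show ?thesis using e1 e2 e3 by simp
qed

lemma PiM_Pi_pmf_borel:
  fixes Q :: "real pmf" and I :: "'i set"
  assumes fin: "finite I" and ne: "I \<noteq> {}"
  shows "PiM I (\<lambda>_. distr (measure_pmf Q) borel id) =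
         distr (measure_pmf (Pi_pmf I d (\<lambda>_. Q))) (PiM I (\<lambda>_. borel)) (\<lambda>x. \<lambda>i\<in>I. x i)"
proof -
  let ?P = "Pi_pmf I d (\<lambda>_. Q)"
  interpret P: prob_space "measure_pmf ?P" by (rule measure_pmf.prob_space_axioms)
  have ind0: "prob_space.indep_vars (measure_pmf ?P) (\<lambda>_. count_space UNIV) (\<lambda>x f. f x) I"
    by (rule indep_vars_Pi_pmf[OF fin])
  have ind: "prob_space.indep_vars (measure_pmf ?P) (\<lambda>_. borel) (\<lambda>i f. id (f i)) I"
    by (rule prob_space.indep_vars_compose2[OF measure_pmf.prob_space_axioms ind0]) auto
  have comp: "distr (measure_pmf ?P) borel (\<lambda>f. f i) = distr (measure_pmf Q) borel id" if "i \<in> I" for i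
  proof -
    have "distr (measure_pmf ?P) borel (\<lambda>f. f i) = distr (distr (measure_pmf ?P) (count_space UNIV) (\<lambda>f. f i)) borel id"
      by (subst distr_distr) (auto simp: comp_def)
    also have "distr (measure_pmf ?P) (count_space UNIV) (\<lambda>f. f i) = measure_pmf (map_pmf (\<lambda>f. f i) ?P)"
      by (simp add: map_pmf_rep_eq)
    also have "map_pmf (\<lambda>f. f i) ?P = Q"
      using that by (simp add: Pi_pmf_component fin)
    finally show ?thesis .
  qed
  have "distr (measure_pmf ?P) (PiM I (\<lambda>_. borel)) (\<lambda>x. \<lambda>i\<in>I. id (x i)) = PiM I (\<lambda>i. distr (measure_pmf ?P) borel (\<lambda>f. id (f i)))"
    using prob_space.indep_vars_iff_distr_eq_PiM'[OF measure_pmf.prob_space_axioms ne, where M'="\<lambda>_. borel" and X="\<lambda>i f. id (f i)"] ind by auto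
  also have "\<dots> = PiM I (\<lambda>_. distr (measure_pmf Q) borel id)"
    by (rule PiM_cong) (auto simp: comp)
  finally show ?thesis by simp
qed

lemma sum_bool_card:
  fixes f :: "bool \<Rightarrow> real"
  assumes "finite I"
  shows "(\<Sum>i\<in>I. f (h i)) = real (card {i\<in>I. h i}) * f True + (real (card I) - real (card {i\<in>I. h i})) * f False"
proof -
  have "(\<Sum>i\<in>I. f (h i)) = (\<Sum>i\<in>{i\<in>I. h i}. f (h i)) + (\<Sum>i\<in>{i\<in>I. \<not> h i}. f (h i))"
    using assms by (subst sum.union_disjoint[symmetric]) (auto intro!: sum.cong)
  also have "\<dots> = real (card {i\<in>I. h i}) * f True + real (card {i\<in>I. \<not> h i}) * f False"
    by simp
  also have "card {i\<in>I. \<not> h i} = card I - card {i\<in>I. h i}"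
  proof -
    have "{i\<in>I. \<not> h i} = I - {i\<in>I. h i}" by auto
    then show ?thesis using assms by (simp add: card_Diff_subset)
  qed
  also have "real (card I - card {i\<in>I. h i}) = real (card I) - real (card {i\<in>I. h i})"
    using assms by (intro of_nat_diff) (auto intro: card_mono)
  finally show ?thesis .
qed

lemma PiM_bernoulli_sum:
  fixes f :: "bool \<Rightarrow> real" and I :: "'i set"
  assumes fin: "finite I" and ne: "I \<noteq> {}" and w: "0 \<le> w" "w \<le> 1" and B: "B \<in> sets borel"
  shows "measure (PiM I (\<lambda>_. distr (measure_pmf (map_pmf f (bernoulli_pmf w))) borel id))
            {\<omega> \<in> space (PiM I (\<lambda>_. borel)). (\<Sum>i\<in>I. \<omega> i) \<in> B}
       = measure_pmf.prob (binomial_pmf (card I) w) {j. real j * f True + (real (card I) - real j) * f False \<in> B}"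
proof -
  let ?Q = "map_pmf f (bernoulli_pmf w)"
  let ?A = "{\<omega> \<in> space (PiM I (\<lambda>_. borel)). (\<Sum>i\<in>I. \<omega> i) \<in> B}"
  have Ameas: "?A \<in> sets (PiM I (\<lambda>_. borel))"
    using B by measurable
  have "measure (PiM I (\<lambda>_. distr (measure_pmf ?Q) borel id)) ?A
      = measure (distr (measure_pmf (Pi_pmf I (f False) (\<lambda>_. ?Q))) (PiM I (\<lambda>_. borel)) (\<lambda>x. \<lambda>i\<in>I. x i)) ?A"
    using PiM_Pi_pmf_borel[OF fin ne, of ?Q "f False"] by simp
  also have "\<dots> = measure_pmf.prob (Pi_pmf I (f False) (\<lambda>_. ?Q)) ((\<lambda>x. \<lambda>i\<in>I. x i) -` ?A \<inter> space (measure_pmf (Pi_pmf I (f False) (\<lambda>_. ?Q))))"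
    by (rule measure_distr[OF _ Ameas]) (auto simp: space_PiM)
  also have "\<dots> = measure_pmf.prob (Pi_pmf I (f False) (\<lambda>_. ?Q)) {x. (\<Sum>i\<in>I. x i) \<in> B}"
    by (rule arg_cong[where f="measure _"]) (auto simp: space_PiM)
  also have "Pi_pmf I (f False) (\<lambda>_. ?Q) = map_pmf (\<lambda>h. f \<circ> h) (Pi_pmf I False (\<lambda>_. bernoulli_pmf w))"
    by (rule Pi_pmf_map) (auto simp: fin)
  also have "measure_pmf.prob (map_pmf (\<lambda>h. f \<circ> h) (Pi_pmf I False (\<lambda>_. bernoulli_pmf w))) {x. (\<Sum>i\<in>I. x i) \<in> B}
      = measure_pmf.prob (Pi_pmf I False (\<lambda>_. bernoulli_pmf w)) ((\<lambda>h. card {i\<in>I. h i}) -` {j. real j * f True + (real (card I) - real j) * f False \<in> B})"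
    by (simp add: sum_bool_card[OF fin] vimage_def)
  also have "\<dots> = measure_pmf.prob (binomial_pmf (card I) w) {j. real j * f True + (real (card I) - real j) * f False \<in> B}"
    using binomial_pmf_altdef'[OF fin refl, of w False] w by simp
  finally show ?thesis .
qed


lemma helper_div: "s \<noteq> 0 \<Longrightarrow> (C::real) / k * (s * A) / (s * r) = C * A / r / k"
  by (simp add: divide_inverse ac_simps)

lemma BE_binomial:
  assumes C: "berry_esseen_const C" and w: "0 < w" "w < 1" and K: "K > 0"
  shows "measure_pmf.prob (binomial_pmf K w) {j. real j \<le> real K * w}
           \<le> 1/2 + C * (w\<^sup>2 + (1 - w)\<^sup>2) / sqrt (w * (1 - w)) / sqrt (real K)"
proof -
  define f where "f b = (if b then 1 - w else - w)" for b
  define Q where "Q = map_pmf f (bernoulli_pmf w)"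
  define \<mu> where "\<mu> = distr (measure_pmf Q) borel id"
  have finQ: "finite (set_pmf Q)" unfolding Q_def by simp
  have intg: "g \<in> borel_measurable borel \<Longrightarrow> integral\<^sup>L \<mu> g = w * g (1 - w) + (1 - w) * g (- w)" for g :: "real \<Rightarrow> real"
    using w unfolding \<mu>_def Q_def by (subst integral_distr) (auto simp: f_def)
  have ps: "prob_space \<mu>" unfolding \<mu>_def
    by (rule prob_space.prob_space_distr) (auto simp: measure_pmf.prob_space_axioms)
  have sets: "sets \<mu> = sets borel" unfolding \<mu>_def by simp
  have integ: "integrable \<mu> (\<lambda>y. \<bar>y\<bar> ^ 3)" unfolding \<mu>_def
    by (subst integrable_distr_eq) (auto intro: integrable_measure_pmf_finite[OF finQ])
  have m1: "(\<integral>y. y \<partial>\<mu>) = 0" using intg[of "\<lambda>y. y"] by (simp add: algebra_simps)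
  have m2: "(\<integral>y. y\<^sup>2 \<partial>\<mu>) = w * (1 - w)" using intg[of "\<lambda>y. y\<^sup>2"] by (simp add: power2_eq_square algebra_simps)
  have m3: "(\<integral>y. \<bar>y\<bar> ^ 3 \<partial>\<mu>) = w * (1 - w) * (w\<^sup>2 + (1 - w)\<^sup>2)"
    using intg[of "\<lambda>y. \<bar>y\<bar> ^ 3"] w by (simp add: power2_eq_square power3_eq_cube algebra_simps)
  have s2pos: "w * (1 - w) > 0" using w by simp
  from C[unfolded berry_esseen_const_def, rule_format, of \<mu>] ps sets integ m1 m2 s2pos K
  have BE: "\<bar>measure (PiM {..<K} (\<lambda>_. \<mu>))
              {\<omega> \<in> space (PiM {..<K} (\<lambda>_. \<mu>)). (\<Sum>i<K. \<omega> i) / sqrt (real K * (w * (1 - w))) \<le> 0}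
            - std_normal_cdf 0\<bar>
          \<le> C / sqrt (real K) * (w * (1 - w) * (w\<^sup>2 + (1 - w)\<^sup>2)) / (w * (1 - w)) powr (3/2)"
    by (simp only: m2 m3)
  have sp: "space (PiM {..<K} (\<lambda>_. \<mu>)) = space (PiM {..<K} (\<lambda>_. borel))"
    unfolding \<mu>_def by (simp add: space_PiM)
  have "sqrt (real K * (w * (1 - w))) > 0" using K s2pos by simp
  then have set_eq: "{\<omega> \<in> space (PiM {..<K} (\<lambda>_. \<mu>)). (\<Sum>i<K. \<omega> i) / sqrt (real K * (w * (1 - w))) \<le> 0}
      = {\<omega> \<in> space (PiM {..<K} (\<lambda>_. borel)). (\<Sum>i<K. \<omega> i) \<in> {..0}}"
    unfolding sp by (auto simp: divide_le_0_iff)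
  have "measure (PiM {..<K} (\<lambda>_. \<mu>)) {\<omega> \<in> space (PiM {..<K} (\<lambda>_. borel)). (\<Sum>i<K. \<omega> i) \<in> {..0}}
      = measure_pmf.prob (binomial_pmf K w) {j. real j * f True + (real K - real j) * f False \<in> {..0}}"
    unfolding \<mu>_def Q_def using PiM_bernoulli_sum[of "{..<K}" w "{..0}" f] K w by (simp add: lessThan_empty_iff)
  also have "{j. real j * f True + (real K - real j) * f False \<in> {..0}} = {j. real j \<le> real K * w}"
    by (auto simp: f_def algebra_simps)
  finally have meq: "measure (PiM {..<K} (\<lambda>_. \<mu>)) {\<omega> \<in> space (PiM {..<K} (\<lambda>_. \<mu>)). (\<Sum>i<K. \<omega> i) / sqrt (real K * (w * (1 - w))) \<le> 0}
      = measure_pmf.prob (binomial_pmf K w) {j. real j \<le> real K * w}" by (simp add: set_eq)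
  have pw: "(w * (1 - w)) powr (3/2) = (w * (1 - w)) * sqrt (w * (1 - w))"
  proof -
    have "(w * (1 - w)) powr (3/2) = (w * (1 - w)) powr (1 + 1/2)" by simp
    also have "\<dots> = (w * (1 - w)) * sqrt (w * (1 - w))"
      using s2pos by (subst powr_add) (simp add: powr_half_sqrt)
    finally show ?thesis .
  qed
  have rhs: "C / sqrt (real K) * (w * (1 - w) * (w\<^sup>2 + (1 - w)\<^sup>2)) / (w * (1 - w)) powr (3/2)
      = C * (w\<^sup>2 + (1 - w)\<^sup>2) / sqrt (w * (1 - w)) / sqrt (real K)"
    unfolding pw using s2pos by (simp add: helper_div)
  show ?thesis using BE unfolding meq rhs std_normal_cdf_0 by linarith
qed


lemma distr_bernoulli_var:
  fixes X :: "'a \<Rightarrow> real"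
  assumes ps: "prob_space M" and rv: "X \<in> borel_measurable M"
    and b01: "AE \<omega> in M. X \<omega> \<in> {0, 1}"
    and bp: "measure M {\<omega> \<in> space M. X \<omega> = 1} = p"
    and p: "0 \<le> p" "p \<le> 1"
  shows "distr M borel X = distr (measure_pmf (map_pmf (\<lambda>b. if b then 1 else 0) (bernoulli_pmf p))) borel id"
proof (rule measure_eqI)
  interpret prob_space M by (rule ps)
  let ?E1 = "{\<omega> \<in> space M. X \<omega> = 1}" and ?E0 = "{\<omega> \<in> space M. X \<omega> = 0}"
  have m1: "?E1 \<in> sets M" and m0: "?E0 \<in> sets M" using rv by measurable
  have "prob (?E0 \<union> ?E1) = 1"
    by (subst prob_eq_1) (use m0 m1 b01 in \<open>auto elim!: AE_mp intro!: AE_I2\<close>)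
  moreover have "prob (?E0 \<union> ?E1) = prob ?E0 + prob ?E1"
    by (rule finite_measure_Union) (use m0 m1 in auto)
  ultimately have p0: "prob ?E0 = 1 - p" using bp by simp
  fix A :: "real set" assume A: "A \<in> sets (distr M borel X)"
  then have A': "A \<in> sets borel" by simp
  define S where "S = (if 1 \<in> A then ?E1 else {}) \<union> (if 0 \<in> A then ?E0 else {})"
  have Sm: "S \<in> sets M" unfolding S_def using m0 m1 by auto
  have "emeasure (distr M borel X) A = emeasure M (X -` A \<inter> space M)"
    using A' rv by (simp add: emeasure_distr)
  also have "\<dots> = emeasure M S"
  proof (rule emeasure_eq_AE)
    show "AE x in M. (x \<in> X -` A \<inter> space M) = (x \<in> S)"
      using b01 by eventually_elim (auto simp: S_def)
  qed (use Sm rv A' in auto)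
  also have "\<dots> = ennreal ((if 1 \<in> A then p else 0) + (if 0 \<in> A then 1 - p else 0))"
  proof -
    have "prob S = (if 1 \<in> A then p else 0) + (if 0 \<in> A then 1 - p else 0)"
    proof (cases "1 \<in> A"; cases "0 \<in> A")
      assume "1 \<in> A" "0 \<in> A"
      then have "prob S = prob (?E0 \<union> ?E1)" unfolding S_def by (simp add: Un_commute)
      also have "\<dots> = prob ?E0 + prob ?E1"
        by (rule finite_measure_Union) (use m0 m1 in auto)
      finally show ?thesis using p0 bp \<open>1 \<in> A\<close> \<open>0 \<in> A\<close> by simp
    qed (auto simp: S_def p0 bp)
    then show ?thesis by (simp add: emeasure_eq_measure)
  qed
  also have "\<dots> = emeasure (distr (measure_pmf (map_pmf (\<lambda>b. if b then 1 else 0) (bernoulli_pmf p))) borel id) A"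
  proof -
    have "emeasure (distr (measure_pmf (map_pmf (\<lambda>b. if b then 1 else 0) (bernoulli_pmf p))) borel id) A
        = emeasure (measure_pmf (bernoulli_pmf p)) {b. (if b then 1 else 0) \<in> A}"
      using A' by (simp add: emeasure_distr vimage_def)
    also have "\<dots> = ennreal (measure_pmf.prob (bernoulli_pmf p) {b. (if b then 1 else 0) \<in> A})"
      by (simp add: measure_pmf.emeasure_eq_measure)
    also have "measure_pmf.prob (bernoulli_pmf p) {b. (if b then 1 else (0::real)) \<in> A}
        = (if 1 \<in> A then p else 0) + (if 0 \<in> A then 1 - p else 0)"
    proof (cases "1 \<in> A"; cases "0 \<in> A")
      assume "1 \<in> A" "0 \<in> A"
      then have "{b. (if b then 1 else (0::real)) \<in> A} = UNIV" by auto
      then show ?thesis using \<open>1 \<in> A\<close> \<open>0 \<in> A\<close> by simp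
    next
      assume "1 \<in> A" "0 \<notin> A"
      then have "{b. (if b then 1 else (0::real)) \<in> A} = {True}" by auto
      then show ?thesis using \<open>1 \<in> A\<close> \<open>0 \<notin> A\<close> p by (simp add: measure_pmf_single)
    next
      assume "1 \<notin> A" "0 \<in> A"
      then have "{b. (if b then 1 else (0::real)) \<in> A} = {False}" by auto
      then show ?thesis using \<open>1 \<notin> A\<close> \<open>0 \<in> A\<close> p by (simp add: measure_pmf_single)
    next
      assume "1 \<notin> A" "0 \<notin> A"
      then have "{b. (if b then 1 else (0::real)) \<in> A} = {}" by auto
      then show ?thesis using \<open>1 \<notin> A\<close> \<open>0 \<notin> A\<close> by simp
    qed
    finally show ?thesis by (rule sym)
  qed
  finally show "emeasure (distr M borel X) A = emeasure (distr (measure_pmf (map_pmf (\<lambda>b. if b then 1 else 0) (bernoulli_pmf p))) borel id) A" .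
qed simp

lemma sum_binomial:
  fixes X :: "nat \<Rightarrow> 'a \<Rightarrow> real"
  assumes ps: "prob_space M" and rv: "\<And>i. i \<ge> 1 \<Longrightarrow> X i \<in> borel_measurable M"
    and indep: "prob_space.indep_vars M (\<lambda>_. borel) X {1..}"
    and bern01: "\<And>i. i \<ge> 1 \<Longrightarrow> AE \<omega> in M. X i \<omega> \<in> {0, 1}"
    and bernp: "\<And>i. i \<ge> 1 \<Longrightarrow> measure M {\<omega> \<in> space M. X i \<omega> = 1} = p"
    and p: "0 \<le> p" "p \<le> 1" and K: "K > 0" and B: "B \<in> sets borel"
  shows "measure M {\<omega> \<in> space M. (\<Sum>i\<in>{1..K}. X i \<omega>) \<in> B} = measure_pmf.prob (binomial_pmf K p) {j. real j \<in> B}"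
proof -
  interpret prob_space M by (rule ps)
  let ?I = "{1..K}"
  let ?Q = "map_pmf (\<lambda>b. if b then 1 else (0::real)) (bernoulli_pmf p)"
  have ne: "?I \<noteq> {}" using K by simp
  have ind: "indep_vars (\<lambda>_. borel) X ?I"
    by (rule indep_vars_subset[OF indep]) auto
  have D: "distr M (PiM ?I (\<lambda>_. borel)) (\<lambda>x. \<lambda>i\<in>?I. X i x) = PiM ?I (\<lambda>i. distr M borel (X i))"
    using indep_vars_iff_distr_eq_PiM'[OF ne, where M'="\<lambda>_. borel" and X=X] ind rv by auto
  also have "\<dots> = PiM ?I (\<lambda>_. distr (measure_pmf ?Q) borel id)"
    by (rule PiM_cong) (auto intro!: distr_bernoulli_var ps rv bern01 bernp p)
  finally have D': "distr M (PiM ?I (\<lambda>_. borel)) (\<lambda>x. \<lambda>i\<in>?I. X i x) = PiM ?I (\<lambda>_. distr (measure_pmf ?Q) borel id)" .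
  let ?A = "{\<omega> \<in> space (PiM ?I (\<lambda>_. borel)). (\<Sum>i\<in>?I. \<omega> i) \<in> B}"
  have Am: "?A \<in> sets (PiM ?I (\<lambda>_. borel))" using B by measurable
  have gm: "(\<lambda>x. \<lambda>i\<in>?I. X i x) \<in> measurable M (PiM ?I (\<lambda>_. borel))"
    by (rule measurable_restrict) (auto intro: rv)
  have "measure M {\<omega> \<in> space M. (\<Sum>i\<in>?I. X i \<omega>) \<in> B} = measure M ((\<lambda>x. \<lambda>i\<in>?I. X i x) -` ?A \<inter> space M)"
    by (rule arg_cong[where f="measure M"]) (auto simp: space_PiM)
  also have "\<dots> = measure (distr M (PiM ?I (\<lambda>_. borel)) (\<lambda>x. \<lambda>i\<in>?I. X i x)) ?A"
    by (rule measure_distr[symmetric, OF gm Am])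
  also have "\<dots> = measure (PiM ?I (\<lambda>_. distr (measure_pmf ?Q) borel id)) ?A"
    by (simp only: D')
  also have "\<dots> = measure_pmf.prob (binomial_pmf (card ?I) p) {j. real j * 1 + (real (card ?I) - real j) * 0 \<in> B}"
    using PiM_bernoulli_sum[of ?I p B "\<lambda>b. if b then 1 else 0"] ne p B by simp
  finally show ?thesis by simp
qed


lemma binom_prob:
  assumes "0 < w" "w < 1"
  shows "measure_pmf.prob (binomial_pmf K w) S = (\<Sum>j\<in>{j\<in>S. j \<le> K}. real (K choose j) * w ^ j * (1 - w) ^ (K - j))"
proof -
  have "measure_pmf.prob (binomial_pmf K w) S = measure_pmf.prob (binomial_pmf K w) (S \<inter> set_pmf (binomial_pmf K w))"
    by (simp add: measure_Int_set_pmf)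
  also have "S \<inter> set_pmf (binomial_pmf K w) = {j\<in>S. j \<le> K}" using assms by auto
  also have "measure_pmf.prob (binomial_pmf K w) {j\<in>S. j \<le> K} = (\<Sum>j\<in>{j\<in>S. j \<le> K}. pmf (binomial_pmf K w) j)"
    by (rule measure_measure_pmf_finite) auto
  finally show ?thesis using assms by simp
qed

lemma tilt_sum:
  fixes a b :: real
  assumes z: "0 < z" "z < 1" and pz: "p = a * z" "1 - p = b * (1 - z)"
    and ab: "\<And>j. j \<in> S \<Longrightarrow> j \<le> m \<Longrightarrow> a ^ j * b ^ (m - j) \<le> E" and E: "0 \<le> E"
  shows "(\<Sum>j\<in>{j\<in>S. j \<le> m}. real (m choose j) * p ^ j * (1 - p) ^ (m - j))
       \<le> E * (\<Sum>j\<in>{j\<in>S. j \<le> m}. real (m choose j) * z ^ j * (1 - z) ^ (m - j))"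
  unfolding sum_distrib_left
proof (rule sum_mono)
  fix j assume j: "j \<in> {j\<in>S. j \<le> m}"
  have "real (m choose j) * p ^ j * (1 - p) ^ (m - j) = (a ^ j * b ^ (m - j)) * (real (m choose j) * z ^ j * (1 - z) ^ (m - j))"
  proof -
    have "p ^ j = a ^ j * z ^ j" using pz(1) by (simp add: power_mult_distrib)
    moreover have "(1 - p) ^ (m - j) = b ^ (m - j) * (1 - z) ^ (m - j)" using pz(2) by (simp add: power_mult_distrib)
    ultimately show ?thesis by (simp add: ac_simps)
  qed
  also have "\<dots> \<le> E * (real (m choose j) * z ^ j * (1 - z) ^ (m - j))"
    using j ab z by (intro mult_right_mono) auto
  finally show "real (m choose j) * p ^ j * (1 - p) ^ (m - j) \<le> E * (real (m choose j) * z ^ j * (1 - z) ^ (m - j))" .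
qed

lemma exp_rate:
  assumes z: "0 < z" "z < 1" and p: "0 < p" "p < 1" and g: "real g = real m * z"
  shows "exp (real m * rateM z p) = (p / z) ^ g * ((1 - p) / (1 - z)) ^ (m - g)"
proof -
  have gm: "g \<le> m" using g z by (metis mult_left_le of_nat_le_iff less_le_not_le of_nat_0_le_iff)
  have "real m * rateM z p = real g * ln (p / z) + real (m - g) * ln ((1 - p) / (1 - z))"
    unfolding rateM_def using g gm by (simp add: of_nat_diff algebra_simps)
  then show ?thesis using z p
    by (simp add: exp_add exp_of_nat_mult)
qed

lemma tilt_lower:
  assumes z: "0 < z" "z < p" and p: "p < 1" and g: "real g = real m * z"
  shows "measure_pmf.prob (binomial_pmf m p) {j. j \<le> g}
       \<le> exp (real m * rateM z p) * measure_pmf.prob (binomial_pmf m z) {j. j \<le> g}"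
proof -
  define a where "a = p / z"
  define b where "b = (1 - p) / (1 - z)"
  have a1: "a \<ge> 1" unfolding a_def using z by simp
  have b0: "0 < b" "b \<le> 1" unfolding b_def using z p by auto
  have gm: "g \<le> m" using g z p by (metis mult_left_le of_nat_le_iff less_le_not_le of_nat_0_le_iff less_trans)
  have E: "exp (real m * rateM z p) = a ^ g * b ^ (m - g)"
    unfolding a_def b_def using z p g by (intro exp_rate) auto
  have P1: "measure_pmf.prob (binomial_pmf m p) {j. j \<le> g} = (\<Sum>j\<in>{j\<in>{j. j \<le> g}. j \<le> m}. real (m choose j) * p ^ j * (1 - p) ^ (m - j))"
    by (rule binom_prob) (use z p in auto)
  have P2: "measure_pmf.prob (binomial_pmf m z) {j. j \<le> g} = (\<Sum>j\<in>{j\<in>{j. j \<le> g}. j \<le> m}. real (m choose j) * z ^ j * (1 - z) ^ (m - j))"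
    by (rule binom_prob) (use z p in auto)
  show ?thesis
    unfolding P1 P2 E using z p
  proof (intro tilt_sum[where a=a and b=b])
    fix j assume j: "j \<in> {j. j \<le> g}" "j \<le> m"
    show "a ^ j * b ^ (m - j) \<le> a ^ g * b ^ (m - g)"
      using j a1 b0 by (intro mult_mono power_increasing power_decreasing) auto
  qed (auto simp: a_def b_def intro!: mult_nonneg_nonneg zero_le_power b0)
qed

lemma tilt_upper:
  assumes z: "p < z" "z < 1" and p: "0 < p" and g: "real g = real m * z"
  shows "measure_pmf.prob (binomial_pmf m p) {j. g \<le> j}
       \<le> exp (real m * rateM z p) * measure_pmf.prob (binomial_pmf m z) {j. g \<le> j}"
proof -
  define a where "a = p / z"
  define b where "b = (1 - p) / (1 - z)"
  have a1: "0 < a" "a \<le> 1" unfolding a_def using z p by auto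
  have b0: "1 \<le> b" unfolding b_def using z p by simp
  have E: "exp (real m * rateM z p) = a ^ g * b ^ (m - g)"
    unfolding a_def b_def using z p g by (intro exp_rate) auto
  have P1: "measure_pmf.prob (binomial_pmf m p) {j. g \<le> j} = (\<Sum>j\<in>{j\<in>{j. g \<le> j}. j \<le> m}. real (m choose j) * p ^ j * (1 - p) ^ (m - j))"
    by (rule binom_prob) (use z p in auto)
  have P2: "measure_pmf.prob (binomial_pmf m z) {j. g \<le> j} = (\<Sum>j\<in>{j\<in>{j. g \<le> j}. j \<le> m}. real (m choose j) * z ^ j * (1 - z) ^ (m - j))"
    by (rule binom_prob) (use z p in auto)
  show ?thesis
    unfolding P1 P2 E using z p
  proof (intro tilt_sum[where a=a and b=b])
    fix j assume j: "j \<in> {j. g \<le> j}" "j \<le> m"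
    show "a ^ j * b ^ (m - j) \<le> a ^ g * b ^ (m - g)"
      using j a1 b0 by (intro mult_mono power_increasing power_decreasing) auto
  qed (auto simp: a_def b_def intro!: mult_nonneg_nonneg zero_le_power a1)
qed

lemma binom_flip:
  assumes z: "0 < z" "z < 1" and g: "real g = real m * z"
  shows "measure_pmf.prob (binomial_pmf m z) {j. g \<le> j} = measure_pmf.prob (binomial_pmf m (1 - z)) {j. real j \<le> real m * (1 - z)}"
proof -
  have gm: "g \<le> m" using g z by (metis mult_left_le of_nat_le_iff less_le_not_le of_nat_0_le_iff)
  have S: "{j \<in> {j. real j \<le> real m * (1 - z)}. j \<le> m} = {..m - g}"
    using g gm by (auto simp: algebra_simps of_nat_diff)
  have key: "real (m choose a) * z ^ a * (1 - z) ^ (m - a) = real (m choose (m - a)) * (1 - z) ^ (m - a) * (1 - (1 - z)) ^ (m - (m - a))" if "a \<le> m" for a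
  proof -
    have "m choose (m - a) = m choose a" using that by (intro binomial_symmetric[symmetric])
    then show ?thesis using that by simp
  qed
  have "(\<Sum>j\<in>{j \<in> {j. g \<le> j}. j \<le> m}. real (m choose j) * z ^ j * (1 - z) ^ (m - j))
      = (\<Sum>k\<in>{..m - g}. real (m choose k) * (1 - z) ^ k * (1 - (1 - z)) ^ (m - k))"
  proof (rule sum.reindex_bij_witness[of _ "\<lambda>k. m - k" "\<lambda>j. m - j"])
    fix a assume "a \<in> {j \<in> {j. g \<le> j}. j \<le> m}"
    then show "real (m choose (m - a)) * (1 - z) ^ (m - a) * (1 - (1 - z)) ^ (m - (m - a)) = real (m choose a) * z ^ a * (1 - z) ^ (m - a)"
      by (intro key[symmetric]) auto
  qed (use gm in auto)
  moreover have "measure_pmf.prob (binomial_pmf m z) {j. g \<le> j} = (\<Sum>j\<in>{j \<in> {j. g \<le> j}. j \<le> m}. real (m choose j) * z ^ j * (1 - z) ^ (m - j))"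
    by (rule binom_prob) (use z in auto)
  moreover have "measure_pmf.prob (binomial_pmf m (1 - z)) {j. real j \<le> real m * (1 - z)} = (\<Sum>j\<in>{j \<in> {j. real j \<le> real m * (1 - z)}. j \<le> m}. real (m choose j) * (1 - z) ^ j * (1 - (1 - z)) ^ (m - j))"
    by (rule binom_prob) (use z in auto)
  ultimately show ?thesis unfolding S by simp
qed


lemma disc_nats:
  assumes s0: "s 0 = 0" and st: "\<And>k. s (Suc k) = s k \<or> s (Suc k) = s k + 1"
  shows "s k \<in> \<nat>"
proof (induction k)
  case 0 then show ?case using s0 by simp
next
  case (Suc k) then show ?case using st[of k] by (auto intro: Nats_add)
qed

lemma disc_mono:
  assumes st: "\<And>k. s (Suc k) = s k \<or> s (Suc k) = (s k :: real) + 1"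
  shows "k \<le> l \<Longrightarrow> s k \<le> s l"
proof (induction l)
  case 0 then show ?case by simp
next
  case (Suc l) then show ?case using st[of l] by (auto simp: le_Suc_eq)
qed

lemma disc_ivt:
  assumes s0: "s 0 = 0" and st: "\<And>k. s (Suc k) = s k \<or> s (Suc k) = s k + 1"
  shows "s k \<ge> real g \<Longrightarrow> \<exists>j\<le>k. s j = real g"
proof (induction k)
  case 0 then show ?case using s0 by auto
next
  case (Suc k)
  show ?case
  proof (cases "s k \<ge> real g")
    case True then show ?thesis using Suc by (auto intro: le_SucI)
  next
    case False
    obtain t where t: "s k = real t" using disc_nats[OF s0 st, of k] by (auto elim: Nats_cases)
    with False have "t + 1 \<le> g" by simp
    then have "s (Suc k) = real g" using Suc.prems st[of k] t False by auto
    then show ?thesis by auto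
  qed
qed

lemma hit_lower:
  assumes s0: "s 0 = 0" and st: "\<And>k. s (Suc k) = s k \<or> s (Suc k) = s k + 1"
    and g: "g > 0" and z: "z > 0" and gm: "real g = real m * z"
    and le: "real g / real (LEAST k. s k = real g) \<le> z"
  shows "s m \<le> real g"
proof (rule ccontr)
  assume "\<not> s m \<le> real g"
  then have sm: "s m > real g" by simp
  then obtain j where j: "j \<le> m" "s j = real g" using disc_ivt[OF s0 st, of g m] by auto
  define n where "n = (LEAST k. s k = real g)"
  have sn: "s n = real g" unfolding n_def using j by (auto intro: LeastI)
  have nj: "n \<le> j" unfolding n_def using j by (auto intro: Least_le)
  have n0: "n \<noteq> 0" proof assume "n = 0" then show False using sn s0 g by simp qed
  have "real g \<le> z * real n" using le n0 z unfolding n_def[symmetric] by (simp add: divide_le_eq)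
  then have "real m * z \<le> real n * z" using gm by (simp add: algebra_simps)
  then have "m \<le> n" using z by simp
  then have "n = m" using nj j by simp
  then show False using sn sm by simp
qed

lemma hit_upper:
  assumes st: "\<And>k. s (Suc k) = s k \<or> s (Suc k) = (s k :: real) + 1" and s0: "s 0 = 0"
    and g: "g > 0" and z: "z > 0" and gm: "real g = real m * z"
    and hit: "\<exists>k. s k = real g"
    and ge: "real g / real (LEAST k. s k = real g) \<ge> z"
  shows "s m \<ge> real g"
proof -
  define n where "n = (LEAST k. s k = real g)"
  have sn: "s n = real g" unfolding n_def using hit by (auto intro: LeastI_ex)
  have n0: "n \<noteq> 0" proof assume "n = 0" then show False using sn s0 g by simp qed
  have "z * real n \<le> real g" using ge n0 z unfolding n_def[symmetric] by (simp add: le_divide_eq)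
  then have "real n * z \<le> real m * z" using gm by (simp add: algebra_simps)
  then have "n \<le> m" using z by simp
  then show ?thesis using disc_mono[of s, OF st \<open>n \<le> m\<close>] sn by simp
qed

lemma poly_geom_0:
  assumes r: "0 < r" "r < 1"
  shows "(\<lambda>K::nat. real K ^ j * r ^ K) \<longlonglongrightarrow> 0"
proof -
  define c where "c = - ln r"
  have c: "c > 0" unfolding c_def using r by simp
  have lim: "((\<lambda>x::real. x ^ j / exp x) \<longlongrightarrow> 0) at_top" by (rule tendsto_power_div_exp_0)
  have filt: "filterlim (\<lambda>K::nat. c * real K) at_top sequentially"
    by (rule filterlim_tendsto_pos_mult_at_top[OF tendsto_const c filterlim_real_sequentially])
  have "(\<lambda>K::nat. (c * real K) ^ j / exp (c * real K)) \<longlonglongrightarrow> 0"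
    by (rule filterlim_compose[OF lim filt])
  then have "(\<lambda>K::nat. (c * real K) ^ j / exp (c * real K) * (1 / c ^ j)) \<longlonglongrightarrow> 0 * (1 / c ^ j)"
    by (intro tendsto_mult tendsto_const)
  moreover have "(c * real K) ^ j / exp (c * real K) * (1 / c ^ j) = real K ^ j * r ^ K" for K
  proof -
    have "exp (c * real K) = inverse (r ^ K)"
      unfolding c_def using r by (simp add: exp_minus mult.commute[of _ "real K"] exp_of_nat_mult)
    then show ?thesis using c r by (simp add: power_mult_distrib field_simps)
  qed
  ultimately show ?thesis by simp
qed

lemma measure_le_AE:
  assumes "finite_measure M" "AE x in M. x \<in> E \<longrightarrow> x \<in> A" "A \<in> sets M"
  shows "measure M E \<le> measure M A"
proof (cases "E \<in> sets M")
  case True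
  have "emeasure M E \<le> emeasure M A"
    by (rule emeasure_mono_AE) (use assms in auto)
  then show ?thesis using assms(1) True assms(3)
    by (simp add: finite_measure.emeasure_eq_measure)
next
  case False then show ?thesis by (simp add: measure_notin_sets)
qed

lemma min_bound: "(x::real) \<le> 1/2 + d \<Longrightarrow> x \<le> 1 \<Longrightarrow> x \<le> 1/2 + min (1/2) d"
  by (simp add: min_def)

lemma delta_eq:
  assumes z: "0 < z" "z < 1" and gm: "real g = real m * z"
  shows "C * Q / sqrt (z * (1 - z)) / sqrt (real m) = C * Q / sqrt (real g * (1 - z))"
proof -
  have "sqrt (z * (1 - z)) * sqrt (real m) = sqrt (real g * (1 - z))"
    unfolding gm by (simp add: real_sqrt_mult[symmetric] ac_simps)
  then show ?thesis by (simp add: divide_divide_eq_left)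
qed


theorem corollary2:
  fixes M :: "'a measure" and X :: "nat \<Rightarrow> 'a \<Rightarrow> real"
    and p C :: real and \<gamma> :: nat
  assumes "prob_space M"
    and rv: "\<And>i. i \<ge> 1 \<Longrightarrow> X i \<in> borel_measurable M"
    and indep: "prob_space.indep_vars M (\<lambda>_. borel) X {1..}"
    and bern01: "\<And>i. i \<ge> 1 \<Longrightarrow> AE \<omega> in M. X i \<omega> \<in> {0, 1}"
    and bernp: "\<And>i. i \<ge> 1 \<Longrightarrow> measure M {\<omega> \<in> space M. X i \<omega> = 1} = p"
    and p: "0 < p" "p < 1"
    and \<gamma>: "\<gamma> > 0"
    and C: "berry_esseen_const C"
  shows
    "(\<forall>z. 0 < z \<and> z < p \<and> real \<gamma> / z \<in> \<int> \<longrightarrow>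
       measure M {\<omega> \<in> space M. real \<gamma> / real (trials_needed X \<gamma> \<omega>) \<le> z}
         \<le> (1/2 + min (1/2) (C * (z\<^sup>2 + (1 - z)\<^sup>2) / sqrt (real \<gamma> * (1 - z))))
             * exp (real \<gamma> / z * rateM z p)) \<and>
    (\<forall>z. p < z \<and> z < 1 \<and> real \<gamma> / z \<in> \<int> \<longrightarrow>
       measure M {\<omega> \<in> space M. real \<gamma> / real (trials_needed X \<gamma> \<omega>) \<ge> z}
         \<le> (1/2 + min (1/2) (C * (z\<^sup>2 + (1 - z)\<^sup>2) / sqrt (real \<gamma> * (1 - z))))
             * exp (real \<gamma> / z * rateM z p))"
proof -
  interpret prob_space M by fact
  define s where "s k \<omega> = (\<Sum>i\<in>{1..k}. X i \<omega>)" for k \<omega>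
  have smeas: "s k \<in> borel_measurable M" for k
    unfolding s_def by (rule borel_measurable_sum) (use rv in auto)
  have good: "AE \<omega> in M. \<forall>i. 1 \<le> i \<longrightarrow> X i \<omega> \<in> {0, 1}"
    unfolding AE_all_countable using bern01 by auto
  have s0: "s 0 \<omega> = 0" for \<omega> by (simp add: s_def)
  have st: "s (Suc k) \<omega> = s k \<omega> \<or> s (Suc k) \<omega> = s k \<omega> + 1"
    if "\<forall>i. 1 \<le> i \<longrightarrow> X i \<omega> \<in> {0, 1}" for k \<omega>
  proof -
    have "s (Suc k) \<omega> = s k \<omega> + X (Suc k) \<omega>"
      unfolding s_def by (simp add: atLeastAtMostSuc_conv add.commute)
    then show ?thesis using that by auto
  qed
  have tn: "trials_needed X \<gamma> \<omega> = (LEAST k. s k \<omega> = real \<gamma>)" for \<omega>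
    by (simp add: trials_needed_def s_def)
  have distr: "measure M {\<omega> \<in> space M. s K \<omega> \<in> B} = measure_pmf.prob (binomial_pmf K p) {j. real j \<in> B}"
    if "K > 0" "B \<in> sets borel" for K B
    unfolding s_def using sum_binomial[OF \<open>prob_space M\<close> rv indep bern01 bernp _ _ that] p by auto
  have getm: "\<exists>m::nat. m > 0 \<and> real \<gamma> = real m * z" if z: "0 < z" "z < 1" "real \<gamma> / z \<in> \<int>" for z
  proof -
    obtain k where k: "real \<gamma> / z = real_of_int k" using z(3) by (auto elim: Ints_cases)
    have "real \<gamma> / z > 0" using z \<gamma> by simp
    then have "k > 0" using k by simp
    then have "real \<gamma> / z = real (nat k)" using k by simp
    moreover have "nat k > 0" using \<open>k > 0\<close> by simp
    ultimately show ?thesis using z by (intro exI[of _ "nat k"]) (auto simp: field_simps)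
  qed
  have fin: "finite_measure M" by (rule finite_measure_axioms)
  show ?thesis
  proof (intro conjI allI impI)
    fix z assume zz: "0 < z \<and> z < p \<and> real \<gamma> / z \<in> \<int>"
    then have z: "0 < z" "z < p" "z < 1" using p by auto
    obtain m where m: "m > 0" "real \<gamma> = real m * z" using getm[of z] zz z by auto
    have gz: "real \<gamma> / z = real m" using m z by simp
    have "measure M {\<omega> \<in> space M. real \<gamma> / real (trials_needed X \<gamma> \<omega>) \<le> z}
        \<le> measure M {\<omega> \<in> space M. s m \<omega> \<in> {..real \<gamma>}}"
    proof (rule measure_le_AE[OF fin])
      show "AE x in M. x \<in> {\<omega> \<in> space M. real \<gamma> / real (trials_needed X \<gamma> \<omega>) \<le> z} \<longrightarrow>
                       x \<in> {\<omega> \<in> space M. s m \<omega> \<in> {..real \<gamma>}}"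
        using good
      proof eventually_elim
        case (elim \<omega>)
        show ?case
        proof
          assume "\<omega> \<in> {\<omega> \<in> space M. real \<gamma> / real (trials_needed X \<gamma> \<omega>) \<le> z}"
          then have "\<omega> \<in> space M" and le: "real \<gamma> / real (LEAST k. s k \<omega> = real \<gamma>) \<le> z" by (auto simp: tn)
          have "s m \<omega> \<le> real \<gamma>"
            by (rule hit_lower[where s="\<lambda>k. s k \<omega>", OF s0 st[OF elim] \<gamma> z(1) m(2) le])
          then show "\<omega> \<in> {\<omega> \<in> space M. s m \<omega> \<in> {..real \<gamma>}}" using \<open>\<omega> \<in> space M\<close> by simp
        qed
      qed
    qed (use smeas in measurable)
    also have "\<dots> = measure_pmf.prob (binomial_pmf m p) {j. j \<le> \<gamma>}"
      using distr[OF m(1), of "{..real \<gamma>}"] by simp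
    also have "\<dots> \<le> exp (real m * rateM z p) * measure_pmf.prob (binomial_pmf m z) {j. j \<le> \<gamma>}"
      by (rule tilt_lower) (use z p m in auto)
    also have "\<dots> \<le> exp (real m * rateM z p) * (1/2 + min (1/2) (C * (z\<^sup>2 + (1 - z)\<^sup>2) / sqrt (real \<gamma> * (1 - z))))"
    proof (rule mult_left_mono[OF min_bound])
      have "measure_pmf.prob (binomial_pmf m z) {j. real j \<le> real m * z} \<le> 1/2 + C * (z\<^sup>2 + (1 - z)\<^sup>2) / sqrt (z * (1 - z)) / sqrt (real m)"
        by (rule BE_binomial[OF C]) (use z m in auto)
      then show "measure_pmf.prob (binomial_pmf m z) {j. j \<le> \<gamma>} \<le> 1/2 + C * (z\<^sup>2 + (1 - z)\<^sup>2) / sqrt (real \<gamma> * (1 - z))"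
        unfolding delta_eq[OF z(1) z(3) m(2)] m(2)[symmetric] by simp
    qed (auto simp: measure_pmf.prob_le_1)
    finally show "measure M {\<omega> \<in> space M. real \<gamma> / real (trials_needed X \<gamma> \<omega>) \<le> z}
         \<le> (1/2 + min (1/2) (C * (z\<^sup>2 + (1 - z)\<^sup>2) / sqrt (real \<gamma> * (1 - z)))) * exp (real \<gamma> / z * rateM z p)"
      unfolding gz by (simp add: mult.commute)
  next
    fix z assume zz: "p < z \<and> z < 1 \<and> real \<gamma> / z \<in> \<int>"
    then have z: "p < z" "z < 1" "0 < z" using p by auto
    obtain m where m: "m > 0" "real \<gamma> = real m * z" using getm[of z] zz z by auto
    have gz: "real \<gamma> / z = real m" using m z by simp
    define N where "N = {\<omega> \<in> space M. \<forall>k. s k \<omega> < real \<gamma>}"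
    have Nm: "N \<in> sets M" unfolding N_def using smeas by measurable
    have NK: "measure M N \<le> (\<Sum>j<\<gamma>. (1 / (1 - p) ^ j) * (real K ^ j * (1 - p) ^ K))" if K: "K > 0" for K
    proof -
      have "measure M N \<le> measure M {\<omega> \<in> space M. s K \<omega> \<in> {..<real \<gamma>}}"
        by (rule finite_measure_mono) (use smeas in \<open>auto simp: N_def\<close>)
      also have "\<dots> = measure_pmf.prob (binomial_pmf K p) {j. real j < real \<gamma>}"
        using distr[OF K, of "{..<real \<gamma>}"] by simp
      also have "\<dots> = (\<Sum>j\<in>{j\<in>{j. real j < real \<gamma>}. j \<le> K}. real (K choose j) * p ^ j * (1 - p) ^ (K - j))"
        by (rule binom_prob) (use p in auto)
      also have "\<dots> \<le> (\<Sum>j<\<gamma>. real (K choose j) * p ^ j * (1 - p) ^ (K - j))"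
        by (rule sum_mono2) (use p in auto)
      also have "\<dots> \<le> (\<Sum>j<\<gamma>. (1 / (1 - p) ^ j) * (real K ^ j * (1 - p) ^ K))"
      proof (rule sum_mono)
        fix j assume "j \<in> {..<\<gamma>}"
        show "real (K choose j) * p ^ j * (1 - p) ^ (K - j) \<le> 1 / (1 - p) ^ j * (real K ^ j * (1 - p) ^ K)"
        proof (cases "j \<le> K")
          case True
          have c: "real (K choose j) \<le> real K ^ j"
            using binomial_le_pow[OF True] by (metis of_nat_le_iff of_nat_power)
          have pj: "p ^ j \<le> 1" using p by (simp add: power_le_one)
          have "(1 - p) ^ (K - j) = (1 - p) ^ K / (1 - p) ^ j"
            using True p by (simp add: power_diff)
          then have "real (K choose j) * p ^ j * (1 - p) ^ (K - j) = real (K choose j) * p ^ j * ((1 - p) ^ K / (1 - p) ^ j)"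
            by simp
          also have "\<dots> \<le> real K ^ j * 1 * ((1 - p) ^ K / (1 - p) ^ j)"
            using c pj p by (intro mult_mono) auto
          finally show ?thesis by simp
        next
          case False
          then show ?thesis using p by (simp add: binomial_eq_0)
        qed
      qed
      finally show ?thesis .
    qed
    have lim: "(\<lambda>K. \<Sum>j<\<gamma>. (1 / (1 - p) ^ j) * (real K ^ j * (1 - p) ^ K)) \<longlonglongrightarrow> 0"
    proof (rule tendsto_null_sum)
      fix j
      have "(\<lambda>K. (1 / (1 - p) ^ j) * (real K ^ j * (1 - p) ^ K)) \<longlonglongrightarrow> (1 / (1 - p) ^ j) * 0"
        by (intro tendsto_mult tendsto_const poly_geom_0) (use p in auto)
      then show "(\<lambda>K. (1 / (1 - p) ^ j) * (real K ^ j * (1 - p) ^ K)) \<longlonglongrightarrow> 0" by simp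
    qed
    have "measure M N \<le> 0"
      by (rule LIMSEQ_le_const[OF lim]) (use NK in \<open>auto intro!: exI[of _ 1]\<close>)
    then have "N \<in> null_sets M" using Nm by (simp add: emeasure_eq_measure measure_nonneg null_sets_def antisym)
    then have notN: "AE \<omega> in M. \<omega> \<notin> N" by (rule AE_not_in)
    have "measure M {\<omega> \<in> space M. real \<gamma> / real (trials_needed X \<gamma> \<omega>) \<ge> z}
        \<le> measure M {\<omega> \<in> space M. s m \<omega> \<in> {real \<gamma>..}}"
    proof (rule measure_le_AE[OF fin])
      show "AE x in M. x \<in> {\<omega> \<in> space M. real \<gamma> / real (trials_needed X \<gamma> \<omega>) \<ge> z} \<longrightarrow>
                       x \<in> {\<omega> \<in> space M. s m \<omega> \<in> {real \<gamma>..}}"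
        using good notN
      proof eventually_elim
        case (elim \<omega>)
        show ?case
        proof
          assume "\<omega> \<in> {\<omega> \<in> space M. real \<gamma> / real (trials_needed X \<gamma> \<omega>) \<ge> z}"
          then have sp: "\<omega> \<in> space M" and ge: "real \<gamma> / real (LEAST k. s k \<omega> = real \<gamma>) \<ge> z" by (auto simp: tn)
          obtain k where "s k \<omega> \<ge> real \<gamma>" using elim(2) sp unfolding N_def by (auto simp: not_less)
          then have hit: "\<exists>k. s k \<omega> = real \<gamma>"
            using disc_ivt[where s="\<lambda>k. s k \<omega>", OF s0 st[OF elim(1)]] by blast
          have "s m \<omega> \<ge> real \<gamma>"
            by (rule hit_upper[where s="\<lambda>k. s k \<omega>", OF st[OF elim(1)] s0 \<gamma> z(3) m(2) hit ge])
          then show "\<omega> \<in> {\<omega> \<in> space M. s m \<omega> \<in> {real \<gamma>..}}" using sp by simp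
        qed
      qed
    qed (use smeas in measurable)
    also have "\<dots> = measure_pmf.prob (binomial_pmf m p) {j. \<gamma> \<le> j}"
      using distr[OF m(1), of "{real \<gamma>..}"] by simp
    also have "\<dots> \<le> exp (real m * rateM z p) * measure_pmf.prob (binomial_pmf m z) {j. \<gamma> \<le> j}"
      by (rule tilt_upper) (use z p m in auto)
    also have "measure_pmf.prob (binomial_pmf m z) {j. \<gamma> \<le> j} = measure_pmf.prob (binomial_pmf m (1 - z)) {j. real j \<le> real m * (1 - z)}"
      by (rule binom_flip) (use z m in auto)
    also have "exp (real m * rateM z p) * \<dots> \<le> exp (real m * rateM z p) * (1/2 + min (1/2) (C * (z\<^sup>2 + (1 - z)\<^sup>2) / sqrt (real \<gamma> * (1 - z))))"
    proof (rule mult_left_mono[OF min_bound])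
      have "measure_pmf.prob (binomial_pmf m (1 - z)) {j. real j \<le> real m * (1 - z)} \<le> 1/2 + C * ((1 - z)\<^sup>2 + (1 - (1 - z))\<^sup>2) / sqrt ((1 - z) * (1 - (1 - z))) / sqrt (real m)"
        by (rule BE_binomial[OF C]) (use z m in auto)
      also have "C * ((1 - z)\<^sup>2 + (1 - (1 - z))\<^sup>2) / sqrt ((1 - z) * (1 - (1 - z))) / sqrt (real m)
          = C * (z\<^sup>2 + (1 - z)\<^sup>2) / sqrt (z * (1 - z)) / sqrt (real m)"
        by (simp add: ac_simps)
      also have "\<dots> = C * (z\<^sup>2 + (1 - z)\<^sup>2) / sqrt (real \<gamma> * (1 - z))"
        by (rule delta_eq[OF z(3) z(2) m(2)])
      finally show "measure_pmf.prob (binomial_pmf m (1 - z)) {j. real j \<le> real m * (1 - z)} \<le> 1/2 + C * (z\<^sup>2 + (1 - z)\<^sup>2) / sqrt (real \<gamma> * (1 - z))"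
        by simp
    qed (auto simp: measure_pmf.prob_le_1)
    finally show "measure M {\<omega> \<in> space M. real \<gamma> / real (trials_needed X \<gamma> \<omega>) \<ge> z}
         \<le> (1/2 + min (1/2) (C * (z\<^sup>2 + (1 - z)\<^sup>2) / sqrt (real \<gamma> * (1 - z)))) * exp (real \<gamma> / z * rateM z p)"
      unfolding gz by (simp add: mult.commute)
  qed
qed

end
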